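(* Let $G_1,\dots,G_k$ be rooted binary trees and let $\mathcal B(G_1,\dots,G_k)$ be the set of compatible bipartitions of $\bigcup_{i=1}^k \mathcal L(G_i)$. Then $|\mathcal B(G_1,\dots,G_k)| \le \frac{4^k}{2}-1$.
   Context: All trees are rooted and binary; $\mathcal L(T)$ denotes the leaf set of $T$. For a tree $G_i$ with root having children $r_l, r_r$, write $G_{i_l}=G_i[r_l]$ and $G_{i_r}=G_i[r_r]$ for its left and right root subtrees. A bipartition $(L_l,L_r)$ of a set is a pair of nonempty disjoint sets whose union is the set, considered up to swapping the two parts. A bipartition $(L_l,L_r)$ of $\bigcup_{i=1}^k\mathcal L(G_i)$ is compatible with $\{G_1,\dots,G_k\}$ if for each $i$ one of the following holds: (1) $\mathcal L(G_i)\subseteq L_l$; (2) $\mathcal L(G_i)\subseteq L_r$; (3) $\mathcal L(G_{i_l})\subseteq L_l$ and $\mathcal L(G_{i_r})\subseteq L_r$; (4) $\mathcal L(G_{i_l})\subseteq L_r$ and $\mathcal L(G_{i_r})\subseteq L_l$. *)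

theory Defs
  imports Complex_Main
begin

datatype 'a btree = Leaf 'a | Node "'a btree" "'a btree"

fun leaves :: "'a btree \<Rightarrow> 'a set" where
  "leaves (Leaf a) = {a}"
| "leaves (Node l r) = leaves l \<union> leaves r"

fun distinct_leaves :: "'a btree \<Rightarrow> bool" where
  "distinct_leaves (Leaf a) = True"
| "distinct_leaves (Node l r) =
     (distinct_leaves l \<and> distinct_leaves r \<and> leaves l \<inter> leaves r = {})"

fun compatible_tree :: "'a set \<Rightarrow> 'a set \<Rightarrow> 'a btree \<Rightarrow> bool" where
  "compatible_tree Ll Lr (Leaf a) = (leaves (Leaf a) \<subseteq> Ll \<or> leaves (Leaf a) \<subseteq> Lr)"
| "compatible_tree Ll Lr (Node l r) =
     (leaves (Node l r) \<subseteq> Ll \<or> leaves (Node l r) \<subseteq> Lr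
      \<or> (leaves l \<subseteq> Ll \<and> leaves r \<subseteq> Lr)
      \<or> (leaves l \<subseteq> Lr \<and> leaves r \<subseteq> Ll))"

definition all_leaves :: "'a btree list \<Rightarrow> 'a set" where
  "all_leaves Gs = (\<Union>G\<in>set Gs. leaves G)"

text \<open>Bipartitions (up to swapping) are represented as the unordered pair {Ll, Lr}.\<close>
definition compatible_bipartitions :: "'a btree list \<Rightarrow> 'a set set set" where
  "compatible_bipartitions Gs =
     {{Ll, Lr} | Ll Lr. Ll \<noteq> {} \<and> Lr \<noteq> {} \<and> Ll \<inter> Lr = {}
        \<and> Ll \<union> Lr = all_leaves Gs
        \<and> (\<forall>G\<in>set Gs. compatible_tree Ll Lr G)}"

end

theory Submission
  imports Defs "HOL-Library.FuncSet"
begin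

lemma leaves_ne: "leaves G \<noteq> {}"
  by (induction G) auto

fun part :: "nat \<Rightarrow> 'a btree \<Rightarrow> 'a set" where
  "part n (Leaf a) = (if n = 0 then {a} else {})"
| "part n (Node l r) = (if n = 0 then leaves l \<union> leaves r else if n = 2 then leaves l
     else if n = 3 then leaves r else {})"

lemma UN_nth: "(\<Union>i<length xs. f (xs!i)) = (\<Union>x\<in>set xs. f x)"
  by (auto simp: set_conv_nth)

lemma compat_swap: "compatible_tree A B G = compatible_tree B A G"
  by (cases G) auto

lemma part0: "part 0 G = leaves G" by (cases G) auto

definition ch :: "'a set \<Rightarrow> 'a set \<Rightarrow> 'a btree \<Rightarrow> nat" where
  "ch A B G = (if leaves G \<subseteq> A then 0 else if leaves G \<subseteq> B then 1
     else case G of Node l r \<Rightarrow> (if leaves l \<subseteq> A then 2 else 3) | Leaf a \<Rightarrow> 3)"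

lemma ch_le: "ch A B G \<in> {0,1,2,3}"
  unfolding ch_def by (auto split: btree.split)

lemma part_ch:
  assumes "compatible_tree A B G" "A \<inter> B = {}"
  shows "part (ch A B G) G = leaves G \<inter> A"
proof (cases G)
  case (Leaf a)
  then show ?thesis using assms by (auto simp: ch_def)
next
  case (Node l r)
  have nl: "leaves l \<noteq> {}" "leaves r \<noteq> {}" by (rule leaves_ne)+
  show ?thesis using assms nl Node unfolding ch_def by auto
qed

lemma ch_swap:
  assumes "compatible_tree A B G" "A \<inter> B = {}"
  shows "ch A B G \<in> {0,2} \<or> ch B A G \<in> {0,2}"
proof (cases G)
  case (Leaf a)
  then show ?thesis using assms by (auto simp: ch_def)
next
  case (Node l r)
  have nl: "leaves l \<noteq> {}" "leaves r \<noteq> {}" by (rule leaves_ne)+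
  show ?thesis using assms nl Node unfolding ch_def by auto
qed

theorem lemma2:
  fixes Gs :: "'a btree list"
  assumes "length Gs \<ge> 1"
    and "\<forall>G\<in>set Gs. distinct_leaves G"
  shows "real (card (compatible_bipartitions Gs)) \<le> 4 ^ length Gs / 2 - 1"
proof -
  define k where "k = length Gs"
  define Lf where "Lf c = (\<Union>i<k. part (c i) (Gs!i))" for c :: "nat \<Rightarrow> nat"
  define g where "g c = {Lf c, all_leaves Gs - Lf c}" for c
  define P where "P = PiE {..<k} (\<lambda>i. if i = 0 then {0::nat,2} else {0,1,2,3})"
  define z where "z = (\<lambda>i. if i < k then (0::nat) else undefined)"
  define V where "V = P - {z}"
  have zP: "z \<in> P" unfolding P_def z_def by (auto simp: PiE_def extensional_def)
  have finP: "finite P" unfolding P_def by (intro finite_PiE) auto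
  obtain m where km: "k = Suc m" using assms(1) unfolding k_def by (cases "length Gs") auto
  have "card P = (\<Prod>i<k. card (if i = 0 then {0::nat,2} else {0,1,2,3}))"
    unfolding P_def by (simp add: card_PiE)
  also have "\<dots> = 2 * 4 ^ m" unfolding km prod.lessThan_Suc_shift by (simp add: numeral_eq_Suc)
  finally have cP: "card P = 2 * 4 ^ m" .
  have cV: "card V = 2 * 4 ^ m - 1" unfolding V_def using zP finP cP by simp
  have Lz: "Lf z = all_leaves Gs"
  proof -
    have "Lf z = (\<Union>i<k. leaves (Gs!i))"
      unfolding Lf_def z_def
      by (intro SUP_cong refl) (simp add: part0)
    also have "\<dots> = all_leaves Gs" unfolding all_leaves_def k_def
      by (simp add: UN_nth)
    finally show ?thesis .
  qed
  have key: "\<And>A B. A \<noteq> {} \<Longrightarrow> B \<noteq> {} \<Longrightarrow> A \<inter> B = {} \<Longrightarrow> A \<union> B = all_leaves Gs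
     \<Longrightarrow> (\<forall>G\<in>set Gs. compatible_tree A B G) \<Longrightarrow> ch A B (Gs!0) \<in> {0,2}
     \<Longrightarrow> {A, B} \<in> g ` V"
  proof -
    fix A B
    assume a: "A \<noteq> {}" "B \<noteq> {}" "A \<inter> B = {}" "A \<union> B = all_leaves Gs"
      "\<forall>G\<in>set Gs. compatible_tree A B G" "ch A B (Gs!0) \<in> {0,2}"
    define c where "c = (\<lambda>i. if i < k then ch A B (Gs!i) else undefined)"
    have LA: "Lf c = A"
    proof -
      have "Lf c = (\<Union>i<k. leaves (Gs!i) \<inter> A)"
        unfolding Lf_def c_def
        by (intro SUP_cong refl) (simp add: part_ch a(3) a(5) k_def)
      also have "\<dots> = all_leaves Gs \<inter> A" unfolding all_leaves_def k_def
        using UN_nth[of "\<lambda>G. leaves G \<inter> A" Gs] by auto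
      finally show ?thesis using a(4) by auto
    qed
    have BB: "all_leaves Gs - A = B" using a(3,4) by auto
    have chl: "\<forall>i. ch A B (Gs!i) \<in> {0,1,2,3}" using ch_le by blast
    have cP': "c \<in> P" unfolding P_def c_def proof (rule PiE_I)
      fix i assume "i \<in> {..<k}"
      then show "(if i < k then ch A B (Gs ! i) else undefined) \<in> (if i = 0 then {0, 2} else {0, 1, 2, 3})"
        using a(6) chl by (cases "i = 0") auto
    qed auto
    have "c \<noteq> z" using LA Lz a(2) BB by auto
    hence "c \<in> V" using cP' V_def by auto
    moreover have "g c = {A, B}" unfolding g_def LA BB ..
    ultimately show "{A, B} \<in> g ` V" by (metis image_eqI)
  qed
  have sub: "compatible_bipartitions Gs \<subseteq> g ` V"
  proof
    fix p assume "p \<in> compatible_bipartitions Gs"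
    then obtain A B where p: "p = {A,B}" and a: "A \<noteq> {}" "B \<noteq> {}" "A \<inter> B = {}"
      "A \<union> B = all_leaves Gs" "\<forall>G\<in>set Gs. compatible_tree A B G"
      unfolding compatible_bipartitions_def by blast
    have g0: "Gs!0 \<in> set Gs" using assms(1) by (cases Gs) auto
    have ctB: "\<forall>G\<in>set Gs. compatible_tree B A G"
      using a(5) compat_swap by blast
    have "compatible_tree A B (Gs!0)" using a(5) g0 by blast
    from ch_swap[OF this a(3)]
    have "ch A B (Gs!0) \<in> {0,2} \<or> ch B A (Gs!0) \<in> {0,2}" .
    then show "p \<in> g ` V"
    proof
      assume h0: "ch A B (Gs!0) \<in> {0,2}"
      show ?thesis using key[OF a h0] unfolding p .
    next
      assume h: "ch B A (Gs!0) \<in> {0,2}"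
      have e1: "B \<inter> A = {}" using a(3) by blast
      have e2: "B \<union> A = all_leaves Gs" using a(4) by blast
      have "{B, A} \<in> g ` V" using key[OF a(2) a(1) e1 e2 ctB h] .
      then show ?thesis using p by (simp add: insert_commute)
    qed
  qed
  have "card (compatible_bipartitions Gs) \<le> card (g ` V)"
    using sub finP V_def by (intro card_mono) auto
  also have "\<dots> \<le> card V" using finP V_def by (intro card_image_le) auto
  finally have "card (compatible_bipartitions Gs) \<le> 2 * 4 ^ m - 1" using cV by simp
  moreover have "(1::nat) \<le> 2 * 4 ^ m" by simp
  ultimately have "card (compatible_bipartitions Gs) + 1 \<le> 2 * 4 ^ m" by linarith
  hence "real (card (compatible_bipartitions Gs) + 1) \<le> real (2 * 4 ^ m)"
    by (simp only: of_nat_le_iff)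
  hence "real (card (compatible_bipartitions Gs)) + 1 \<le> 2 * 4 ^ m" by simp
  hence "real (card (compatible_bipartitions Gs)) \<le> 2 * 4 ^ m - 1" by linarith
  moreover have "(4::real) ^ length Gs / 2 - 1 = 2 * 4 ^ m - 1"
    using km k_def by simp
  ultimately show ?thesis by simp
qed

end
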